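(* Let $k\ge 1$ be an integer. Every $4k$-edge-connected graph contains $k$ pairwise edge-disjoint $(2,2)$-tight spanning subgraphs.
   Context: A connected graph is $m$-edge-connected if it remains connected after the removal of any $m-1$ edges. Graphs are finite and simple. A graph $G$ is $(2,2)$-sparse if $|E(H)|\le\max\{2|V(H)|-2,0\}$ for every subgraph $H$ of $G$, and $(2,2)$-tight if moreover $|E(G)|=2|V(G)|-2$. *)

theory Defs
  imports Main
begin

definition simple_graph :: "'a set \<Rightarrow> 'a set set \<Rightarrow> bool" where
  "simple_graph V E \<longleftrightarrow> finite V \<and> (\<forall>e\<in>E. \<exists>u v. e = {u, v} \<and> u \<in> V \<and> v \<in> V \<and> u \<noteq> v)"

definition connected_graph :: "'a set \<Rightarrow> 'a set set \<Rightarrow> bool" where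
  "connected_graph V E \<longleftrightarrow> V \<noteq> {} \<and>
     (\<forall>u\<in>V. \<forall>v\<in>V. (\<lambda>x y. {x, y} \<in> E)\<^sup>*\<^sup>* u v)"

definition edge_connected :: "nat \<Rightarrow> 'a set \<Rightarrow> 'a set set \<Rightarrow> bool" where
  "edge_connected m V E \<longleftrightarrow> connected_graph V E \<and>
     (\<forall>F. F \<subseteq> E \<and> card F < m \<longrightarrow> connected_graph V (E - F))"

definition sparse22 :: "'a set \<Rightarrow> 'a set set \<Rightarrow> bool" where
  "sparse22 V E \<longleftrightarrow> (\<forall>W F'. W \<subseteq> V \<and> F' \<subseteq> E \<and> (\<forall>e\<in>F'. e \<subseteq> W) \<longrightarrow>
       int (card F') \<le> max (2 * int (card W) - 2) 0)"

definition tight22 :: "'a set \<Rightarrow> 'a set set \<Rightarrow> bool" where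
  "tight22 V E \<longleftrightarrow> sparse22 V E \<and> int (card E) = 2 * int (card V) - 2"

end

theory Submission
  imports Defs
begin


locale matroid =
  fixes E :: "'e set" and indep :: "'e set \<Rightarrow> bool"
  assumes fin: "finite E"
    and sub: "indep X \<Longrightarrow> X \<subseteq> E"
    and mono: "indep X \<Longrightarrow> Y \<subseteq> X \<Longrightarrow> indep Y"
    and aug: "indep X \<Longrightarrow> indep Y \<Longrightarrow> card X < card Y \<Longrightarrow> \<exists>e\<in>Y-X. indep (insert e X)"
    and empty: "indep {}"
begin

definition span :: "'e set \<Rightarrow> 'e \<Rightarrow> bool" where
  "span I x \<longleftrightarrow> x \<in> I \<or> \<not> indep (insert x I)"

lemma indep_finite: "indep X \<Longrightarrow> finite X"
  using sub fin finite_subset by blast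

lemma ext_max:
  assumes "indep I" "I \<subseteq> U" "indep J" "J \<subseteq> U"
  shows "\<exists>K. indep K \<and> I \<subseteq> K \<and> K \<subseteq> U \<and> card J \<le> card K"
proof -
  let ?P = "\<lambda>K. indep K \<and> I \<subseteq> K \<and> K \<subseteq> U"
  have "\<forall>y. ?P y \<longrightarrow> card y < card E + 1"
    using sub fin by (simp add: card_mono less_Suc_eq_le)
  then obtain K where K: "?P K" "\<forall>y. ?P y \<longrightarrow> card y \<le> card K"
    using ex_has_greatest_nat[of ?P I card "card E + 1"] assms by blast
  show ?thesis
  proof (cases "card J \<le> card K")
    case True then show ?thesis using K by blast
  next
    case False
    then obtain e where e: "e \<in> J - K" "indep (insert e K)"
      using aug[of K J] K assms by auto
    then have "?P (insert e K)" using K assms by auto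
    then have "card (insert e K) \<le> card K" using K by blast
    moreover have "card (insert e K) = card K + 1"
      using e indep_finite K by simp
    ultimately show ?thesis by simp
  qed
qed

lemma span_trans:
  assumes "indep I" "indep I'" "\<forall>x\<in>I'. span I x" "span I' e"
  shows "span I e"
proof (rule ccontr)
  assume ne: "\<not> span I e"
  then have eI: "e \<notin> I" "indep (insert e I)" unfolding span_def by auto
  have eI': "e \<notin> I'" using assms(3) ne by blast
  then have dep: "\<not> indep (insert e I')" using assms(4) unfolding span_def by auto
  obtain K where K: "indep K" "I' \<subseteq> K" "K \<subseteq> I' \<union> insert e I" "card (insert e I) \<le> card K"
    using ext_max[of I' "I' \<union> insert e I" "insert e I"] assms eI by auto
  have "e \<notin> K" using K dep mono by blast
  then have KI: "K \<subseteq> I' \<union> I" using K by auto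
  have "card I < card K" using K eI indep_finite assms by simp
  then obtain x where x: "x \<in> K - I" "indep (insert x I)" using aug[of I K] assms K by auto
  then have "x \<in> I'" using KI by auto
  then show False using assms(3) x unfolding span_def by auto
qed

lemma circuit:
  assumes "indep F" "e \<notin> F" "\<not> indep (insert e F)"
  shows "\<not> indep (insert e {f\<in>F. indep (insert e (F - {f}))})"
proof
  let ?C = "{f\<in>F. indep (insert e (F - {f}))}"
  assume ind: "indep (insert e ?C)"
  obtain K where K: "indep K" "insert e ?C \<subseteq> K" "K \<subseteq> insert e F" "card F \<le> card K"
    using ext_max[of "insert e ?C" "insert e F" F] ind assms by auto
  have "K \<noteq> insert e F" using K assms by auto
  then obtain f where f: "f \<in> F" "f \<notin> K" using K by auto
  have sub2: "K \<subseteq> insert e (F - {f})" using K f by auto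
  have fin2: "finite (insert e (F - {f}))" using indep_finite assms by auto
  have "card (insert e (F - {f})) = card F"
  proof -
    have "finite F" using indep_finite assms by auto
    then have "card F > 0" using f card_gt_0_iff by blast
    then show ?thesis using f assms \<open>finite F\<close> by (simp add: card_Diff_singleton)
  qed
  then have "K = insert e (F - {f})"
    using card_subset_eq[OF fin2 sub2] K by (metis card_mono fin2 le_antisym sub2)
  then have "f \<in> ?C" using K f by auto
  then show False using K f by auto
qed

lemma rank_le:
  assumes "indep I" "indep J" "\<forall>x\<in>J. span I x"
  shows "card J \<le> card I"
proof (rule ccontr)
  assume "\<not> card J \<le> card I"
  then obtain x where "x \<in> J - I" "indep (insert x I)" using aug[of I J] assms by auto
  then show False using assms(3) unfolding span_def by auto
qed

definition valid :: "nat \<Rightarrow> (nat \<Rightarrow> 'e set) \<Rightarrow> bool" where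
  "valid K T \<longleftrightarrow> (\<forall>i<K. indep (T i)) \<and> (\<forall>i<K. \<forall>j<K. i \<noteq> j \<longrightarrow> T i \<inter> T j = {})"

definition tot :: "nat \<Rightarrow> (nat \<Rightarrow> 'e set) \<Rightarrow> nat" where
  "tot K T = (\<Sum>i<K. card (T i))"

definition unc :: "nat \<Rightarrow> (nat \<Rightarrow> 'e set) \<Rightarrow> 'e set" where
  "unc K T = E - (\<Union>i<K. T i)"

definition step :: "nat \<Rightarrow> (nat \<Rightarrow> 'e set) \<Rightarrow> (nat \<Rightarrow> 'e set) \<Rightarrow> bool" where
  "step K T T' \<longleftrightarrow> (\<exists>i<K. \<exists>e f. e \<in> unc K T \<and> f \<in> T i \<and> indep (insert e (T i - {f}))
      \<and> T' = T(i := insert e (T i - {f})))"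

lemma tot_bound: "valid K T \<Longrightarrow> tot K T < K * card E + 1"
proof -
  assume v: "valid K T"
  have "tot K T \<le> (\<Sum>i<K. card E)" unfolding tot_def
    by (rule sum_mono) (use v sub fin in \<open>auto simp: valid_def intro!: card_mono\<close>)
  then show ?thesis by simp
qed

lemma tot_update:
  assumes "i < K"
  shows "tot K (T(i := X)) + card (T i) = tot K T + card X"
proof -
  have a: "tot K (T(i := X)) = (\<Sum>j\<in>{..<K}-{i}. card ((T(i := X)) j)) + card X"
    unfolding tot_def using assms sum.remove[of "{..<K}" i "\<lambda>j. card ((T(i := X)) j)"] by simp
  have b: "(\<Sum>j\<in>{..<K}-{i}. card ((T(i := X)) j)) = (\<Sum>j\<in>{..<K}-{i}. card (T j))"
    by (rule sum.cong) auto
  have c: "tot K T = (\<Sum>j\<in>{..<K}-{i}. card (T j)) + card (T i)"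
    unfolding tot_def using assms sum.remove[of "{..<K}" i "\<lambda>j. card (T j)"] by simp
  show ?thesis using a b c by simp
qed

theorem packing:
  assumes K1: "K \<ge> 1"
  shows "\<exists>T A J. valid K T \<and> A \<subseteq> E \<and> J \<subseteq> A \<and> indep J \<and>
     (\<forall>e\<in>A. e \<in> J \<or> \<not> indep (insert e J)) \<and> card (E - A) + K * card J \<le> tot K T"
proof -
  have v0: "valid K (\<lambda>_. {})" using empty by (simp add: valid_def)
  obtain T0 where T0: "valid K T0" "\<And>T. valid K T \<Longrightarrow> tot K T \<le> tot K T0"
    using ex_has_greatest_nat[of "valid K" "\<lambda>_. {}" "tot K" "K * card E + 1"] v0 tot_bound
    by blast
  have maxprop: "\<not> indep (insert e (T i))"
    if "valid K T" "tot K T = tot K T0" "e \<in> unc K T" "i < K" for T e i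
  proof
    assume ind: "indep (insert e (T i))"
    have eT: "\<forall>j<K. e \<notin> T j" using that(3) unfolding unc_def by auto
    have "valid K (T(i := insert e (T i)))"
      using that(1) ind eT unfolding valid_def by auto
    then have le: "tot K (T(i := insert e (T i))) \<le> tot K T0" using T0 by blast
    have "finite (T i)" using that(1,4) indep_finite valid_def by auto
    then have "card (insert e (T i)) = card (T i) + 1" using eT that(4) by simp
    then show False using tot_update[OF that(4), of T "insert e (T i)"] le that(2) by simp
  qed
  let ?reach = "(step K)\<^sup>*\<^sup>* T0"
  have inv: "valid K T \<and> tot K T = tot K T0" if "?reach T" for T
    using that
  proof (induction rule: rtranclp_induct)
    case base then show ?case using T0 by simp
  next
    case (step T T')
    then obtain i e f where st: "i < K" "e \<in> unc K T" "f \<in> T i" "indep (insert e (T i - {f}))"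
      "T' = T(i := insert e (T i - {f}))" unfolding step_def by blast
    have eT: "\<forall>j<K. e \<notin> T j" using st(2) unfolding unc_def by auto
    have "valid K T'" unfolding valid_def
    proof (intro conjI allI impI)
      fix a assume "a < K" then show "indep (T' a)" using step.IH st unfolding valid_def by auto
    next
      fix a b assume ab: "a < K" "b < K" "a \<noteq> b"
      have d: "T a \<inter> T b = {}" using step.IH ab unfolding valid_def by auto
      show "T' a \<inter> T' b = {}"
        using d ab eT st(5) by (cases "a = i"; cases "b = i") auto
    qed
    moreover have "finite (T i)" using step.IH st(1) indep_finite valid_def by auto
    then have "card (insert e (T i - {f})) = card (T i)"
      using st eT card_gt_0_iff[of "T i"] by (auto simp: card_Diff_singleton)
    then have "tot K T' = tot K T" using tot_update[OF st(1), of T "insert e (T i - {f})"] st by simp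
    ultimately show ?case using step.IH by simp
  qed
  define S where "S = {e. \<exists>T. ?reach T \<and> e \<in> unc K T}"
  have SE: "S \<subseteq> E" unfolding S_def unc_def by auto
  have lemA: "span (T i \<inter> S) e" if "?reach T" "e \<in> unc K T" "i < K" for T e i
  proof -
    have vT: "valid K T" "tot K T = tot K T0" using inv[OF that(1)] by auto
    have indF: "indep (T i)" using vT that(3) valid_def by auto
    have eT: "\<forall>j<K. e \<notin> T j" using that(2) unfolding unc_def by auto
    have dep: "\<not> indep (insert e (T i))" by (rule maxprop[OF vT(1) vT(2) that(2) that(3)])
    let ?C = "{f\<in>T i. indep (insert e (T i - {f}))}"
    have CS: "?C \<subseteq> S"
    proof
      fix f assume f: "f \<in> ?C"
      let ?T' = "T(i := insert e (T i - {f}))"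
      have fTi: "f \<in> T i" and fi: "indep (insert e (T i - {f}))" using f by auto
      have "step K T ?T'" unfolding step_def
        by (rule exI[of _ i], intro conjI, rule that(3), rule exI[of _ e], rule exI[of _ f])
           (use that(2) fTi fi in simp)
      then have r: "?reach ?T'" using that(1) by simp
      have "f \<in> E" using fTi sub[OF indF] by blast
      moreover have "\<forall>j<K. f \<notin> ?T' j"
      proof (intro allI impI)
        fix j assume j: "j < K"
        show "f \<notin> ?T' j"
        proof (cases "j = i")
          case True then show ?thesis using f eT j by auto
        next
          case False then show ?thesis using vT(1) j that(3) f unfolding valid_def by auto
        qed
      qed
      ultimately have "f \<in> unc K ?T'" unfolding unc_def by auto
      then show "f \<in> S" unfolding S_def using r by blast
    qed
    have eF: "e \<notin> T i" using eT that(3) by blast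
    have "\<not> indep (insert e ?C)" by (rule circuit[OF indF eF dep])
    moreover have "insert e ?C \<subseteq> insert e (T i \<inter> S)" using CS by blast
    ultimately have "\<not> indep (insert e (T i \<inter> S))" using mono by metis
    then show ?thesis unfolding span_def by auto
  qed
  have lemB: "span (T i \<inter> S) x"
    if hr: "?reach T" and hs: "step K T T'" and hi: "i < K" and hsp: "span (T' i \<inter> S) x" for T T' i x
  proof -
    obtain j e f where st: "j < K" "e \<in> unc K T" "f \<in> T j" "indep (insert e (T j - {f}))"
      "T' = T(j := insert e (T j - {f}))" using hs unfolding step_def by blast
    show ?thesis
    proof (cases "j = i")
      case False then show ?thesis using hsp st by simp
    next
      case True
      have vT: "valid K T" using inv[OF hr] by auto
      have i1: "indep (T i \<inter> S)" using vT hi valid_def mono by blast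
      have i2: "indep (T' i \<inter> S)" using st True mono by auto
      have eS: "span (T i \<inter> S) e" using lemA that(1,3) st(2) by blast
      have "\<forall>y\<in>T' i \<inter> S. span (T i \<inter> S) y"
        using st True eS by (auto simp: span_def)
      then show ?thesis using span_trans[OF i1 i2] hsp by blast
    qed
  qed
  have lemC: "span (T0 i \<inter> S) x" if "?reach T" "i < K" "span (T i \<inter> S) x" for T i x
    using that
  proof (induction arbitrary: x rule: rtranclp_induct)
    case base then show ?case by simp
  next
    case (step T T') then show ?case using lemB by blast
  qed
  have spanS: "span (T0 i \<inter> S) e" if "e \<in> S" "i < K" for e i
    using that lemA lemC unfolding S_def by blast
  define J where "J = T0 0 \<inter> S"
  have indJ: "indep J" unfolding J_def using T0 K1 mono valid_def by auto
  have JS: "J \<subseteq> S" unfolding J_def by auto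
  have spanJ: "\<forall>e\<in>S. e \<in> J \<or> \<not> indep (insert e J)"
  proof
    fix e assume "e \<in> S"
    then have "span J e" using spanS[of e 0] K1 unfolding J_def by simp
    then show "e \<in> J \<or> \<not> indep (insert e J)" unfolding span_def .
  qed
  have ind_i: "indep (T0 i \<inter> S)" if "i < K" for i using T0 that mono valid_def by auto
  have c1: "card J \<le> card (T0 i \<inter> S)" if "i < K" for i
    using rank_le[OF ind_i[OF that] indJ] spanS JS that by blast
  have finT: "finite (T0 i)" if "i < K" for i using T0 that indep_finite valid_def by auto
  have "tot K T0 = (\<Sum>i<K. card (T0 i \<inter> S)) + (\<Sum>i<K. card (T0 i - S))"
    unfolding tot_def sum.distrib[symmetric]
    by (rule sum.cong) (auto intro!: card_Int_Diff finT)
  moreover have "K * card J \<le> (\<Sum>i<K. card (T0 i \<inter> S))"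
  proof -
    have "(\<Sum>i<K. card J) \<le> (\<Sum>i<K. card (T0 i \<inter> S))" by (rule sum_mono) (use c1 in auto)
    then show ?thesis by simp
  qed
  moreover have "card (E - S) \<le> (\<Sum>i<K. card (T0 i - S))"
  proof -
    have dj: "\<forall>i\<in>{..<K}. \<forall>j\<in>{..<K}. i \<noteq> j \<longrightarrow> (T0 i - S) \<inter> (T0 j - S) = {}"
      using T0(1) unfolding valid_def by blast
    have "(\<Sum>i<K. card (T0 i - S)) = card (\<Union>i<K. T0 i - S)"
      by (rule card_UN_disjoint[symmetric]) (use finT dj in auto)
    moreover have "E - S \<subseteq> (\<Union>i<K. T0 i - S)"
    proof
      fix x assume x: "x \<in> E - S"
      have "x \<notin> unc K T0" using x unfolding S_def by blast
      then show "x \<in> (\<Union>i<K. T0 i - S)" using x unfolding unc_def by auto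
    qed
    ultimately show ?thesis using finT by (simp add: card_mono)
  qed
  ultimately have "card (E - S) + K * card J \<le> tot K T0" by linarith
  then show ?thesis using T0(1) SE JS indJ spanJ by blast
qed

end


definition reachE :: "'a set set \<Rightarrow> 'a \<Rightarrow> 'a \<Rightarrow> bool" where
  "reachE X = (\<lambda>x y. {x, y} \<in> X)\<^sup>*\<^sup>*"

definition cls :: "'a set \<Rightarrow> 'a set set \<Rightarrow> 'a \<Rightarrow> 'a set" where
  "cls V X v = {u\<in>V. reachE X v u}"

definition comp :: "'a set \<Rightarrow> 'a set set \<Rightarrow> nat" where
  "comp V X = card (cls V X ` V)"

definition forest :: "'a set \<Rightarrow> 'a set set \<Rightarrow> 'a set set \<Rightarrow> bool" where
  "forest V E X \<longleftrightarrow> X \<subseteq> E \<and> comp V X + card X = card V"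

lemma reach_refl: "reachE X u u" unfolding reachE_def by simp

lemma reach_edge: "{a, b} \<in> X \<Longrightarrow> reachE X a b" unfolding reachE_def by auto

lemma reach_trans: "reachE X u v \<Longrightarrow> reachE X v w \<Longrightarrow> reachE X u w"
  unfolding reachE_def by (rule rtranclp_trans)

lemma reach_sym: "reachE X u v \<Longrightarrow> reachE X v u"
  unfolding reachE_def
proof (induction rule: rtranclp_induct)
  case base then show ?case by simp
next
  case (step y z)
  then have "{z, y} \<in> X" by (simp add: insert_commute)
  then show ?case using step.IH by (meson converse_rtranclp_into_rtranclp)
qed

lemma reach_mono: "reachE X u v \<Longrightarrow> X \<subseteq> Y \<Longrightarrow> reachE Y u v"
proof -
  assume r: "reachE X u v" and XY: "X \<subseteq> Y"
  have "(\<lambda>x y. {x, y} \<in> X) \<le> (\<lambda>x y. {x, y} \<in> Y)" using XY by auto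
  then have "(\<lambda>x y. {x, y} \<in> X)\<^sup>*\<^sup>* \<le> (\<lambda>x y. {x, y} \<in> Y)\<^sup>*\<^sup>*" by (rule rtranclp_mono)
  then show ?thesis using r unfolding reachE_def by (simp add: le_fun_def)
qed

lemma reach_sub: "reachE X u v \<Longrightarrow> (\<And>a b. {a,b} \<in> X \<Longrightarrow> reachE Y a b) \<Longrightarrow> reachE Y u v"
  unfolding reachE_def
proof (induction rule: rtranclp_induct)
  case base then show ?case by simp
next
  case (step y z)
  have "(\<lambda>x y. {x, y} \<in> Y)\<^sup>*\<^sup>* y z" using step.hyps(2) step.prems by blast
  then show ?case using step.IH step.prems by (meson rtranclp_trans)
qed

lemma reach_insert:
  assumes "reachE (insert {a,b} X) u v"
  shows "reachE X u v \<or> (reachE X u a \<and> reachE X b v) \<or> (reachE X u b \<and> reachE X a v)"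
  using assms unfolding reachE_def
proof (induction rule: rtranclp_induct)
  case base then show ?case by simp
next
  case (step y z)
  let ?R = "(\<lambda>x y. {x, y} \<in> X)\<^sup>*\<^sup>*"
  have IH: "?R u y \<or> (?R u a \<and> ?R b y) \<or> (?R u b \<and> ?R a y)" using step.IH .
  have r: "?R y z \<or> (y = a \<and> z = b) \<or> (y = b \<and> z = a)"
    using step.hyps(2) by (auto simp: doubleton_eq_iff)
  show ?case
  proof (cases "?R y z")
    case True
    then show ?thesis using IH by (meson rtranclp_trans)
  next
    case False
    then have "(y = a \<and> z = b) \<or> (y = b \<and> z = a)" using r by blast
    then show ?thesis
    proof
      assume yz: "y = a \<and> z = b"
      show ?thesis using IH yz by auto
    next
      assume yz: "y = b \<and> z = a"
      show ?thesis using IH yz by auto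
    qed
  qed
qed

lemma reach_cross0:
  assumes "reachE Y x y" "x \<in> C"
  shows "y \<notin> C \<longrightarrow> (\<exists>a b. {a, b} \<in> Y \<and> a \<in> C \<and> b \<notin> C)"
  using assms(1) unfolding reachE_def
proof (induction rule: rtranclp_induct)
  case base show ?case using assms(2) by simp
next
  case (step y z)
  show ?case
  proof (cases "y \<in> C")
    case True then show ?thesis using step.hyps(2) by blast
  next
    case False then show ?thesis using step.IH by blast
  qed
qed

lemma reach_cross:
  assumes "reachE Y x y" "x \<in> C" "y \<notin> C"
  shows "\<exists>a b. {a, b} \<in> Y \<and> a \<in> C \<and> b \<notin> C"
  using reach_cross0[OF assms(1,2)] assms(3) by blast

lemma cls_eq: "u \<in> V \<Longrightarrow> v \<in> V \<Longrightarrow> cls V X u = cls V X v \<longleftrightarrow> reachE X u v"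
proof
  assume uv: "u \<in> V" "v \<in> V" and e: "cls V X u = cls V X v"
  have "v \<in> cls V X v" using reach_refl[of X v] uv unfolding cls_def by simp
  then have "v \<in> cls V X u" using e by simp
  then show "reachE X u v" unfolding cls_def by simp
next
  assume r: "reachE X u v"
  have "reachE X v u" using reach_sym[OF r] .
  show "cls V X u = cls V X v"
  proof (rule set_eqI)
    fix w
    have "reachE X u w \<longleftrightarrow> reachE X v w"
      using reach_trans[OF r, of w] reach_trans[OF \<open>reachE X v u\<close>, of w] by blast
    then show "w \<in> cls V X u \<longleftrightarrow> w \<in> cls V X v" unfolding cls_def by simp
  qed
qed

lemma card_factor:
  assumes "finite V" "\<forall>u\<in>V. \<forall>v\<in>V. h u = h v \<longrightarrow> f u = f v"
  shows "card (f ` V) \<le> card (h ` V)"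
proof -
  have eq: "f v = (f \<circ> inv_into V h) (h v)" if "v \<in> V" for v
  proof -
    have "inv_into V h (h v) \<in> V" using inv_into_into[of "h v" h V] that by blast
    moreover have "h (inv_into V h (h v)) = h v" using f_inv_into_f[of "h v" h V] that by blast
    ultimately have "f (inv_into V h (h v)) = f v" using assms(2) that by blast
    then show ?thesis by simp
  qed
  have "f ` V = (f \<circ> inv_into V h) ` (h ` V)"
  proof
    show "f ` V \<subseteq> (f \<circ> inv_into V h) ` (h ` V)"
    proof
      fix y assume "y \<in> f ` V"
      then obtain v where v: "v \<in> V" "y = f v" by blast
      then have "y = (f \<circ> inv_into V h) (h v)" using eq by simp
      then show "y \<in> (f \<circ> inv_into V h) ` (h ` V)" using v(1) by blast
    qed
    show "(f \<circ> inv_into V h) ` (h ` V) \<subseteq> f ` V"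
    proof
      fix y assume "y \<in> (f \<circ> inv_into V h) ` (h ` V)"
      then obtain v where v: "v \<in> V" "y = (f \<circ> inv_into V h) (h v)" by blast
      then have "y = f v" using eq by simp
      then show "y \<in> f ` V" using v(1) by blast
    qed
  qed
  moreover have "card ((f \<circ> inv_into V h) ` (h ` V)) \<le> card (h ` V)"
    by (rule card_image_le) (use assms(1) in simp)
  ultimately show ?thesis by simp
qed

context
  fixes V :: "'a set" and E :: "'a set set"
  assumes sg: "simple_graph V E"
begin

lemma finV: "finite V" using sg unfolding simple_graph_def by blast

lemma edgeE: "e \<in> E \<Longrightarrow> \<exists>a b. e = {a, b} \<and> a \<in> V \<and> b \<in> V \<and> a \<noteq> b"
  using sg unfolding simple_graph_def by blast

lemma finE: "finite E"
proof -
  have "E \<subseteq> Pow V" using edgeE by blast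
  then show ?thesis using finV finite_subset by blast
qed

lemma comp_empty: "comp V {} = card V"
proof -
  have "cls V {} v = {v}" if "v \<in> V" for v
  proof -
    have "reachE {} v u \<longleftrightarrow> u = v" for u
      unfolding reachE_def by (auto elim: converse_rtranclpE)
    then show ?thesis using that unfolding cls_def by auto
  qed
  then have "cls V {} ` V = (\<lambda>v. {v}) ` V" by auto
  then show ?thesis unfolding comp_def by (simp add: card_image)
qed

lemma comp_pos: "V \<noteq> {} \<Longrightarrow> comp V X \<ge> 1"
  unfolding comp_def using finV by (simp add: Suc_le_eq card_gt_0_iff)

lemma comp_insert_ge:
  assumes "a \<in> V" "b \<in> V"
  shows "comp V X \<le> comp V (insert {a,b} X) + 1"
proof -
  let ?f = "cls V X" and ?h = "cls V (insert {a,b} X)"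
  define V' where "V' = {v\<in>V. ?f v \<noteq> ?f a}"
  have F2: "?f u = ?f v" if "u \<in> V'" "v \<in> V'" "?h u = ?h v" for u v
  proof -
    have uv: "u \<in> V" "v \<in> V" "?f u \<noteq> ?f a" "?f v \<noteq> ?f a" using that V'_def by auto
    have "reachE (insert {a,b} X) u v" using cls_eq[of u V v] uv that(3) by auto
    then have "reachE X u v \<or> (reachE X u a \<and> reachE X b v) \<or> (reachE X u b \<and> reachE X a v)"
      by (rule reach_insert)
    moreover have "\<not> reachE X u a" using cls_eq[of u V a] uv assms by auto
    moreover have "\<not> reachE X a v" using cls_eq[of a V v] uv assms by auto
    ultimately show ?thesis using cls_eq[of u V v] uv by auto
  qed
  have "card (?f ` V') \<le> card (?h ` V')"
    by (rule card_factor) (use finV V'_def F2 in auto)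
  also have "\<dots> \<le> card (?h ` V)" using finV V'_def by (intro card_mono) auto
  finally have 1: "card (?f ` V') \<le> card (?h ` V)" .
  have "?f ` V \<subseteq> insert (?f a) (?f ` V')" unfolding V'_def by auto
  moreover have "finite V'" using finV V'_def by simp
  ultimately have "card (?f ` V) \<le> card (insert (?f a) (?f ` V'))" by (intro card_mono) auto
  also have "\<dots> \<le> card (?f ` V') + 1" by (simp add: card_insert_le_m1)
  finally show ?thesis using 1 unfolding comp_def by simp
qed

lemma comp_insert_lt:
  assumes "a \<in> V" "b \<in> V" "\<not> reachE X a b"
  shows "comp V (insert {a,b} X) < comp V X"
proof -
  let ?f = "cls V X" and ?h = "cls V (insert {a,b} X)"
  define \<phi> where "\<phi> = ?h \<circ> inv_into V ?f"
  have F1: "?h u = ?h v" if "u \<in> V" "v \<in> V" "?f u = ?f v" for u v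
    using cls_eq[of u V v] that reach_mono[of X u v "insert {a,b} X"] by auto
  have img: "?h ` V = \<phi> ` (?f ` V)"
  proof -
    have "?h v = \<phi> (?f v)" if "v \<in> V" for v
      using F1[of v "inv_into V ?f (?f v)"] that inv_into_into[of "?f v" ?f V] f_inv_into_f[of "?f v" ?f V]
      unfolding \<phi>_def by auto
    then show ?thesis by (auto simp: image_iff)
  qed
  have "\<phi> (?f a) = \<phi> (?f b)"
  proof -
    have "?h v = \<phi> (?f v)" if "v \<in> V" for v
      using F1[of v "inv_into V ?f (?f v)"] that inv_into_into[of "?f v" ?f V] f_inv_into_f[of "?f v" ?f V]
      unfolding \<phi>_def by auto
    moreover have "?h a = ?h b" using cls_eq[of a V b] assms reach_edge[of a b "insert {a,b} X"] by auto
    ultimately show ?thesis using assms by metis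
  qed
  moreover have "?f a \<noteq> ?f b" using cls_eq[of a V b] assms by auto
  ultimately have "\<not> inj_on \<phi> (?f ` V)" using assms unfolding inj_on_def by blast
  then have "card (\<phi> ` (?f ` V)) \<noteq> card (?f ` V)" using finV inj_on_iff_eq_card by blast
  moreover have "card (\<phi> ` (?f ` V)) \<le> card (?f ` V)" using finV card_image_le by blast
  ultimately show ?thesis using img unfolding comp_def by simp
qed

lemma comp_lower: "finite Y \<Longrightarrow> Y \<subseteq> E \<Longrightarrow> comp V X \<le> comp V (X \<union> Y) + card Y"
proof (induction Y rule: finite_induct)
  case empty then show ?case by simp
next
  case (insert e Y)
  obtain a b where e: "e = {a,b}" "a \<in> V" "b \<in> V" using edgeE insert by blast
  have "comp V (X \<union> Y) \<le> comp V (insert e (X \<union> Y)) + 1" using comp_insert_ge e by blast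
  then show ?case using insert by simp
qed

lemma comp_card: "X \<subseteq> E \<Longrightarrow> card V \<le> comp V X + card X"
  using comp_lower[of X "{}"] comp_empty finE finite_subset by fastforce

lemma forest_mono: "forest V E J \<Longrightarrow> I \<subseteq> J \<Longrightarrow> forest V E I"
proof -
  assume f: "forest V E J" and IJ: "I \<subseteq> J"
  have JE: "J \<subseteq> E" using f unfolding forest_def by blast
  have finJ: "finite J" using JE finE finite_subset by blast
  have "comp V I \<le> comp V (I \<union> (J - I)) + card (J - I)"
    using comp_lower[of "J - I" I] JE finJ by auto
  moreover have "I \<union> (J - I) = J" using IJ by auto
  moreover have "card (J - I) = card J - card I" using IJ finJ by (simp add: card_Diff_subset finite_subset)
  moreover have "card I \<le> card J" using IJ finJ card_mono by blast
  moreover have "card V \<le> comp V I + card I" using comp_card IJ JE by blast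
  moreover have "comp V J + card J = card V" using f unfolding forest_def by blast
  ultimately have "comp V I + card I = card V" by simp
  moreover have "I \<subseteq> E" using IJ JE by blast
  ultimately show ?thesis unfolding forest_def by blast
qed

lemma forest_add:
  assumes "forest V E J" "{a,b} \<in> E" "\<not> reachE J a b"
  shows "forest V E (insert {a,b} J)"
proof -
  obtain x y where xy: "{a,b} = {x,y}" "x \<in> V" "y \<in> V" using edgeE[OF assms(2)] by blast
  have "(a = x \<and> b = y) \<or> (a = y \<and> b = x)" using xy(1) by (simp add: doubleton_eq_iff)
  then have ab: "a \<in> V" "b \<in> V" using xy(2,3) by blast+
  have JE: "J \<subseteq> E" using assms(1) unfolding forest_def by blast
  have finJ: "finite J" using JE finE finite_subset by blast
  have nin: "{a,b} \<notin> J" using reach_edge[of a b J] assms(3) by blast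
  have "comp V (insert {a,b} J) < comp V J" by (rule comp_insert_lt[OF ab assms(3)])
  moreover have "card V \<le> comp V (insert {a,b} J) + card (insert {a,b} J)"
    by (rule comp_card) (use JE assms(2) in blast)
  moreover have "card (insert {a,b} J) = card J + 1" using nin finJ by simp
  moreover have "comp V J + card J = card V" using assms(1) unfolding forest_def by blast
  ultimately have "comp V (insert {a,b} J) + card (insert {a,b} J) = card V" by linarith
  moreover have "insert {a,b} J \<subseteq> E" using JE assms(2) by blast
  ultimately show ?thesis unfolding forest_def by blast
qed

lemma forest_aug:
  assumes "forest V E I" "forest V E J" "card I < card J"
  shows "\<exists>e\<in>J - I. forest V E (insert e I)"
proof (rule ccontr)
  assume na: "\<not> ?thesis"
  have r: "reachE I a b" if "{a,b} \<in> J" for a b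
  proof (cases "{a,b} \<in> I")
    case True then show ?thesis by (rule reach_edge)
  next
    case False
    have "J \<subseteq> E" using assms(2) unfolding forest_def by blast
    then have "{a,b} \<in> E" using that by blast
    show ?thesis
    proof (rule ccontr)
      assume "\<not> reachE I a b"
      then have "forest V E (insert {a,b} I)" by (rule forest_add[OF assms(1) \<open>{a,b} \<in> E\<close>])
      moreover have "{a,b} \<in> J - I" using that False by blast
      ultimately show False using na by blast
    qed
  qed
  have "comp V I \<le> comp V J"
    unfolding comp_def
  proof (rule card_factor[OF finV], intro ballI impI)
    fix u v assume uv: "u \<in> V" "v \<in> V" "cls V J u = cls V J v"
    then have "reachE J u v" using cls_eq[of u V v J] by blast
    then have "reachE I u v" using r by (rule reach_sub)
    then show "cls V I u = cls V I v" using cls_eq[of u V v I] uv by blast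
  qed
  moreover have "comp V I + card I = card V" "comp V J + card J = card V"
    using assms(1,2) unfolding forest_def by blast+
  ultimately show False using assms(3) by linarith
qed

lemma matroid_forest: "matroid E (forest V E)"
proof
  show "finite E" by (rule finE)
  show "\<And>X. forest V E X \<Longrightarrow> X \<subseteq> E" by (simp add: forest_def)
  show "\<And>X Y. forest V E X \<Longrightarrow> Y \<subseteq> X \<Longrightarrow> forest V E Y" by (rule forest_mono)
  show "\<And>X Y. forest V E X \<Longrightarrow> forest V E Y \<Longrightarrow> card X < card Y \<Longrightarrow> \<exists>e\<in>Y - X. forest V E (insert e X)"
    by (rule forest_aug)
  show "forest V E {}" by (simp add: forest_def comp_empty)
qed

end


context
  fixes V :: "'a set" and E :: "'a set set"
  assumes sg: "simple_graph V E"
begin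

lemma lower_bound:
  assumes ec: "edge_connected (2*K) V E" and fJ: "forest V E J" and JA: "J \<subseteq> A" and AE: "A \<subseteq> E"
    and sp: "\<forall>e\<in>A. e \<in> J \<or> \<not> forest V E (insert e J)"
  shows "K * (card V - 1) \<le> card (E - A) + K * card J"
proof -
  have Vne: "V \<noteq> {}" using ec unfolding edge_connected_def connected_graph_def by blast
  have finV: "finite V" by (rule finV[OF sg])
  have finE: "finite E" by (rule finE[OF sg])
  define c where "c = comp V J"
  have cJ: "c + card J = card V" using fJ unfolding forest_def c_def by blast
  have c1: "c \<ge> 1" unfolding c_def by (rule comp_pos[OF sg Vne])
  show ?thesis
  proof (cases "c \<le> 1")
    case True
    then have "card V - 1 \<le> card J" using cJ by linarith
    then have "K * (card V - 1) \<le> K * card J" by simp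
    then show ?thesis by linarith
  next
    case False
    then have c2: "c \<ge> 2" by simp
    have JE: "J \<subseteq> E" using fJ unfolding forest_def by blast
    have rA: "reachE J a b" if "{a,b} \<in> A" for a b
    proof (cases "{a,b} \<in> J")
      case True then show ?thesis by (rule reach_edge)
    next
      case False
      then have nf: "\<not> forest V E (insert {a,b} J)" using sp that by blast
      show ?thesis
      proof (rule ccontr)
        assume "\<not> reachE J a b"
        moreover have "{a,b} \<in> E" using that AE by blast
        ultimately have "forest V E (insert {a,b} J)" using forest_add[OF sg fJ] by blast
        then show False using nf by blast
      qed
    qed
    define Cl where "Cl = cls V J ` V"
    have finCl: "finite Cl" unfolding Cl_def using finV by simp
    have cardCl: "card Cl = c" unfolding Cl_def c_def comp_def by simp
    define D where "D = E - A"
    have finD: "finite D" unfolding D_def using finE by simp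
    define \<delta> where "\<delta> C = {e\<in>E. \<exists>a b. e = {a,b} \<and> a \<in> C \<and> b \<notin> C}" for C
    have clsV: "cls V J v \<subseteq> V" for v unfolding cls_def by blast
    have edgeV: "a \<in> V" "b \<in> V" if abE: "{a,b} \<in> E" for a b
    proof -
      obtain x y where xy: "{a,b} = {x,y}" "x \<in> V" "y \<in> V" using edgeE[OF sg abE] by blast
      have "(a = x \<and> b = y) \<or> (a = y \<and> b = x)" using xy(1) by (simp add: doubleton_eq_iff)
      then show "a \<in> V" "b \<in> V" using xy(2,3) by blast+
    qed
    have dD: "\<delta> C \<subseteq> D" if CCl: "C \<in> Cl" for C
    proof
      fix e assume e: "e \<in> \<delta> C"
      then obtain a b where ab: "e = {a,b}" "a \<in> C" "b \<notin> C" "e \<in> E" unfolding \<delta>_def by blast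
      obtain v where v: "v \<in> V" "C = cls V J v" using CCl unfolding Cl_def by blast
      show "e \<in> D"
      proof (rule ccontr)
        assume "e \<notin> D"
        then have "e \<in> A" using ab(4) unfolding D_def by blast
        then have r1: "reachE J a b" using rA[of a b] ab(1) by simp
        have r2: "reachE J v a" using ab(2) v unfolding cls_def by blast
        have "reachE J v b" using reach_trans[OF r2 r1] .
        moreover have "b \<in> V" using edgeV(2)[of a b] ab(1,4) by simp
        ultimately have "b \<in> C" using v unfolding cls_def by blast
        then show False using ab(3) by blast
      qed
    qed
    have dK: "2 * K \<le> card (\<delta> C)" if CCl: "C \<in> Cl" for C
    proof -
      obtain v where v: "v \<in> V" "C = cls V J v" using CCl unfolding Cl_def by blast
      have vC: "v \<in> C" using v reach_refl[of J v] unfolding cls_def by blast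
      have "\<exists>w\<in>V. w \<notin> C"
      proof (rule ccontr)
        assume "\<not> (\<exists>w\<in>V. w \<notin> C)"
        then have all: "\<forall>u\<in>V. reachE J v u" using v unfolding cls_def by blast
        have "Cl = {cls V J v}"
        proof
          show "Cl \<subseteq> {cls V J v}"
          proof
            fix C' assume "C' \<in> Cl"
            then obtain u where u: "u \<in> V" "C' = cls V J u" unfolding Cl_def by blast
            then have "cls V J v = cls V J u" using cls_eq[of v V u J] v(1) all by blast
            then show "C' \<in> {cls V J v}" using u by simp
          qed
          show "{cls V J v} \<subseteq> Cl" unfolding Cl_def using v(1) by blast
        qed
        then have "c = 1" using cardCl by simp
        then show False using c2 by simp
      qed
      then obtain w where w: "w \<in> V" "w \<notin> C" by blast
      show ?thesis
      proof (rule ccontr)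
        assume lt: "\<not> 2 * K \<le> card (\<delta> C)"
        have sub: "\<delta> C \<subseteq> E" unfolding \<delta>_def by blast
        have "connected_graph V (E - \<delta> C)"
          using ec sub lt unfolding edge_connected_def by auto
        then have "(\<lambda>x y. {x, y} \<in> E - \<delta> C)\<^sup>*\<^sup>* v w" using v(1) w(1) unfolding connected_graph_def by blast
        then have "reachE (E - \<delta> C) v w" unfolding reachE_def .
        then obtain a b where ab: "{a,b} \<in> E - \<delta> C" "a \<in> C" "b \<notin> C"
          using reach_cross[of "E - \<delta> C" v w C] vC w(2) by blast
        then have "{a,b} \<in> \<delta> C" unfolding \<delta>_def by blast
        then show False using ab(1) by blast
      qed
    qed
    have cnt: "card (\<delta> C) = (\<Sum>e\<in>D. if e \<in> \<delta> C then 1 else 0)" if "C \<in> Cl" for C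
    proof -
      have "(\<Sum>e\<in>D. if e \<in> \<delta> C then 1 else 0) = (\<Sum>e\<in>{e\<in>D. e \<in> \<delta> C}. (1::nat))"
        using sum.inter_filter[OF finD, of "\<lambda>_. (1::nat)" "\<lambda>e. e \<in> \<delta> C"] by simp
      also have "{e\<in>D. e \<in> \<delta> C} = \<delta> C" using dD[OF that] by blast
      finally show ?thesis by simp
    qed
    have inner: "(\<Sum>C\<in>Cl. if e \<in> \<delta> C then 1 else 0) \<le> (2::nat)" if "e \<in> D" for e
    proof -
      have eE: "e \<in> E" using that unfolding D_def by blast
      obtain a b where ab: "e = {a,b}" "a \<in> V" "b \<in> V" using edgeE[OF sg eE] by blast
      have sub: "{C\<in>Cl. e \<in> \<delta> C} \<subseteq> {cls V J a, cls V J b}"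
      proof
        fix C assume C: "C \<in> {C\<in>Cl. e \<in> \<delta> C}"
        then obtain x y where xy: "e = {x,y}" "x \<in> C" "y \<notin> C" unfolding \<delta>_def by blast
        obtain u where u: "u \<in> V" "C = cls V J u" using C unfolding Cl_def by blast
        have xV: "x \<in> V" and rx: "reachE J u x" using xy(2) u unfolding cls_def by blast+
        have "cls V J u = cls V J x" using cls_eq[of u V x J] u(1) xV rx by blast
        moreover have "x = a \<or> x = b" using xy(1) ab(1) by (auto simp: doubleton_eq_iff)
        ultimately show "C \<in> {cls V J a, cls V J b}" using u by auto
      qed
      have "(\<Sum>C\<in>Cl. if e \<in> \<delta> C then 1 else 0) = (\<Sum>C\<in>{C\<in>Cl. e \<in> \<delta> C}. (1::nat))"
        using sum.inter_filter[OF finCl, of "\<lambda>_. (1::nat)" "\<lambda>C. e \<in> \<delta> C"] by simp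
      also have "\<dots> = card {C\<in>Cl. e \<in> \<delta> C}" by simp
      also have "\<dots> \<le> card {cls V J a, cls V J b}" using sub by (intro card_mono) auto
      also have "\<dots> \<le> 2" by (simp add: card_insert_le_m1)
      finally show ?thesis .
    qed
    have "(\<Sum>C\<in>Cl. 2 * K) \<le> (\<Sum>C\<in>Cl. card (\<delta> C))" by (rule sum_mono) (rule dK)
    also have "\<dots> = (\<Sum>C\<in>Cl. \<Sum>e\<in>D. if e \<in> \<delta> C then 1 else 0)" by (rule sum.cong) (auto intro: cnt)
    also have "\<dots> = (\<Sum>e\<in>D. \<Sum>C\<in>Cl. if e \<in> \<delta> C then 1 else 0)" by (rule sum.swap)
    also have "\<dots> \<le> (\<Sum>e\<in>D. 2)" by (rule sum_mono) (rule inner)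
    finally have "c * (2 * K) \<le> card D * 2" using cardCl by simp
    then have "K * c \<le> card D" by (simp add: mult.commute)
    then have "K * card V \<le> card D + K * card J" using cJ by (metis add_mult_distrib2 add_le_mono1)
    moreover have "K * (card V - 1) \<le> K * card V" by simp
    ultimately show ?thesis unfolding D_def by linarith
  qed
qed

lemma forest_sparse:
  assumes fF: "forest V E F" and WV: "W \<subseteq> V" and YF: "Y \<subseteq> F" and YW: "\<forall>e\<in>Y. e \<subseteq> W" and Wne: "W \<noteq> {}"
  shows "card Y + 1 \<le> card W"
proof -
  have finV: "finite V" by (rule finV[OF sg])
  have fY: "forest V E Y" by (rule forest_mono[OF sg fF YF])
  have cY: "comp V Y + card Y = card V" using fY unfolding forest_def by blast
  have single: "cls V Y v = {v}" if "v \<in> V - W" for v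
  proof -
    have "u = v" if r: "reachE Y v u" for u
    proof -
      have "(\<lambda>x y. {x, y} \<in> Y)\<^sup>*\<^sup>* v u" using r unfolding reachE_def .
      then show "u = v"
      proof (cases rule: converse_rtranclpE)
        case base then show ?thesis by simp
      next
        case (step y)
        then have "{v, y} \<subseteq> W" using YW by blast
        then show ?thesis using \<open>v \<in> V - W\<close> by blast
      qed
    qed
    then show ?thesis using that reach_refl[of Y v] unfolding cls_def by blast
  qed
  obtain w0 where w0: "w0 \<in> W" using Wne by blast
  have w0V: "w0 \<in> V" using w0 WV by blast
  have w0c: "w0 \<in> cls V Y w0" using w0V reach_refl[of Y w0] unfolding cls_def by blast
  have nin: "cls V Y w0 \<notin> (\<lambda>v. {v}) ` (V - W)"
  proof
    assume "cls V Y w0 \<in> (\<lambda>v. {v}) ` (V - W)"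
    then obtain v where "v \<in> V - W" "cls V Y w0 = {v}" by blast
    then show False using w0c w0 by auto
  qed
  have sub: "insert (cls V Y w0) ((\<lambda>v. {v}) ` (V - W)) \<subseteq> cls V Y ` V"
    using single w0V by blast
  have "card (insert (cls V Y w0) ((\<lambda>v. {v}) ` (V - W))) = card (V - W) + 1"
    using nin finV by (simp add: card_image)
  moreover have "card (insert (cls V Y w0) ((\<lambda>v. {v}) ` (V - W))) \<le> comp V Y"
    unfolding comp_def using sub finV by (intro card_mono) auto
  moreover have "card (V - W) = card V - card W" using WV finV by (simp add: card_Diff_subset finite_subset)
  moreover have "card W \<le> card V" using WV finV card_mono by blast
  ultimately show ?thesis using cY by linarith
qed

end


theorem mainTheorem9:
  fixes V :: "'a set" and E :: "'a set set" and k :: nat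
  assumes "k \<ge> 1"
    and "simple_graph V E"
    and "edge_connected (4 * k) V E"
  shows "\<exists>T :: nat \<Rightarrow> 'a set set.
           (\<forall>i<k. T i \<subseteq> E \<and> tight22 V (T i)) \<and>
           (\<forall>i<k. \<forall>j<k. i \<noteq> j \<longrightarrow> T i \<inter> T j = {})"
proof -
  note sg = assms(2)
  have Vne: "V \<noteq> {}" using assms(3) unfolding edge_connected_def connected_graph_def by blast
  have finV: "finite V" by (rule finV[OF sg])
  interpret M: matroid E "forest V E" by (rule matroid_forest[OF sg])
  define K where "K = 2 * k"
  have K1: "K \<ge> 1" using assms(1) K_def by simp
  obtain T A J where TAJ: "M.valid K T" "A \<subseteq> E" "J \<subseteq> A" "forest V E J"
     "\<forall>e\<in>A. e \<in> J \<or> \<not> forest V E (insert e J)" "card (E - A) + K * card J \<le> M.tot K T"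
    using M.packing[OF K1] by blast
  have ec: "edge_connected (2 * K) V E" using assms(3) K_def by (simp add: mult.assoc)
  have lb: "K * (card V - 1) \<le> card (E - A) + K * card J"
    by (rule lower_bound[OF sg ec TAJ(4) TAJ(3) TAJ(2) TAJ(5)])
  have fT: "forest V E (T i)" if "i < K" for i using TAJ(1) that unfolding M.valid_def by blast
  have djT: "T i \<inter> T j = {}" if "i < K" "j < K" "i \<noteq> j" for i j
    using TAJ(1) that unfolding M.valid_def by blast
  have le: "card (T i) \<le> card V - 1" if "i < K" for i
  proof -
    have "comp V (T i) + card (T i) = card V" using fT[OF that] unfolding forest_def by blast
    moreover have "comp V (T i) \<ge> 1" by (rule comp_pos[OF sg Vne])
    ultimately show ?thesis by linarith
  qed
  have eq: "card (T i) = card V - 1" if "i < K" for i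
  proof (rule ccontr)
    assume ne: "card (T i) \<noteq> card V - 1"
    have "(\<Sum>j<K. card (T j)) < (\<Sum>j<K. card V - 1)"
      by (rule sum_strict_mono_ex1) (use le ne that in \<open>auto intro!: bexI[of _ i] simp: le_neq_implies_less\<close>)
    then have "M.tot K T < K * (card V - 1)" unfolding M.tot_def by simp
    then show False using lb TAJ(6) by linarith
  qed
  have finT: "finite (T i)" if "i < K" for i using fT[OF that] M.indep_finite by blast
  have TE: "T i \<subseteq> E" if "i < K" for i using fT[OF that] unfolding forest_def by blast
  define P where "P i = T (2*i) \<union> T (2*i+1)" for i
  have idx: "2*i < K" "2*i+1 < K" if "i < k" for i using that K_def by auto
  have tight: "tight22 V (P i)" if "i < k" for i
  proof -
    have d: "T (2*i) \<inter> T (2*i+1) = {}" using djT idx[OF that] by simp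
    have "card (P i) = card (T (2*i)) + card (T (2*i+1))"
      unfolding P_def using d finT idx[OF that] by (simp add: card_Un_disjoint)
    then have cP: "card (P i) = 2 * (card V - 1)" using eq idx[OF that] by simp
    have n1: "card V \<ge> 1" using finV Vne by (simp add: Suc_le_eq card_gt_0_iff)
    have c2: "int (card (P i)) = 2 * int (card V) - 2" using cP n1 by simp
    have sp: "sparse22 V (P i)" unfolding sparse22_def
    proof (intro allI impI)
      fix W F' assume a: "W \<subseteq> V \<and> F' \<subseteq> P i \<and> (\<forall>e\<in>F'. e \<subseteq> W)"
      have WV: "W \<subseteq> V" and FP: "F' \<subseteq> P i" and FW: "\<forall>e\<in>F'. e \<subseteq> W" using a by blast+
      have spl: "F' = (F' \<inter> T (2*i)) \<union> (F' \<inter> T (2*i+1))" using FP unfolding P_def by blast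
      show "int (card F') \<le> max (2 * int (card W) - 2) 0"
      proof (cases "W = {}")
        case True
        have "F' = {}"
        proof (rule ccontr)
          assume "F' \<noteq> {}"
          then obtain e where e: "e \<in> F'" by blast
          then have "e \<in> E" using FP TE idx[OF that] unfolding P_def by blast
          then obtain a b where "e = {a,b}" using edgeE[OF sg] by blast
          then show False using FW e True by blast
        qed
        then show ?thesis by simp
      next
        case False
        have b1: "card (F' \<inter> T (2*i)) + 1 \<le> card W"
          by (rule forest_sparse[OF sg fT[OF idx(1)[OF that]] WV _ _ False]) (use FW in auto)
        have b2: "card (F' \<inter> T (2*i+1)) + 1 \<le> card W"
          by (rule forest_sparse[OF sg fT[OF idx(2)[OF that]] WV _ _ False]) (use FW in auto)
        have "card F' \<le> card (F' \<inter> T (2*i)) + card (F' \<inter> T (2*i+1))"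
          by (subst spl) (rule card_Un_le)
        then have "card F' + 2 \<le> 2 * card W" using b1 b2 by linarith
        then show ?thesis by linarith
      qed
    qed
    show ?thesis unfolding tight22_def using sp c2 by blast
  qed
  have PE: "P i \<subseteq> E" if "i < k" for i using TE idx[OF that] unfolding P_def by blast
  have dis: "P i \<inter> P j = {}" if "i < k" "j < k" "i \<noteq> j" for i j
  proof -
    have "T a \<inter> T b = {}" if "a \<in> {2*i, 2*i+1}" "b \<in> {2*j, 2*j+1}" for a b
    proof (rule djT)
      show "a < K" using that(1) idx[OF \<open>i < k\<close>] by auto
      show "b < K" using that(2) idx[OF \<open>j < k\<close>] by auto
      show "a \<noteq> b" using that \<open>i \<noteq> j\<close> by auto
    qed
    then show ?thesis unfolding P_def by blast
  qed
  show ?thesis using tight PE dis by blast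
qed


end
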